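(* Let $\{g_\xi\}_{\xi\in K}$ be a family of real-valued continuous functions on the unit circle $\mathbb{T}$, and for bounded non-negative measures $d\mu_0,d\mu_1$ on $\mathbb{T}$ define $\delta(d\mu_0,d\mu_1)=\sup_{\xi\in K}\left|\int_{\mathbb{T}}g_\xi\,(d\mu_0-d\mu_1)\right|$. Then $\delta$ is a weakly continuous metric on the set $\mathfrak{M}$ of bounded non-negative measures on $\mathbb{T}$ if and only if the following two conditions hold: (a) for any two distinct measures $d\mu_0\neq d\mu_1$ in $\mathfrak{M}$ there is $\xi\in K$ with $\int_{\mathbb{T}}g_\xi d\mu_0\neq\int_{\mathbb{T}}g_\xi d\mu_1$; and (b) the family $\{g_\xi\}_{\xi\in K}$ is equicontinuous and uniformly bounded.
   Context: Weak topology on $\mathfrak{M}$: $d\mu_k\to d\mu$ iff $\int fd\mu_k\to\int fd\mu$ for every real continuous $f$ on $\mathbb{T}$; a metric $\delta$ on $\mathfrak{M}$ is weakly continuous if it is continuous on $\mathfrak{M}\times\mathfrak{M}$ for this topology. The family is equicontinuous if for every $\epsilon>0$ there is $\gamma>0$ such that $|g_\xi(\theta_1)-g_\xi(\theta_2)|<\epsilon$ whenever $|\theta_1-\theta_2|<\gamma$, for all $\theta_1,\theta_2\in\mathbb{T}$ and all $\xi\in K$. *)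

theory Defs
  imports "HOL-Analysis.Analysis"
begin

abbreviation circle :: "complex set" where "circle \<equiv> sphere 0 1"

definition circle_measures :: "complex measure set" where
  "circle_measures = {\<mu>. sets \<mu> = sets (restrict_space borel circle) \<and> emeasure \<mu> (space \<mu>) < \<infinity>}"

definition weak_conv :: "(nat \<Rightarrow> complex measure) \<Rightarrow> complex measure \<Rightarrow> bool" where
  "weak_conv \<mu>s \<mu> \<longleftrightarrow> (\<forall>f :: complex \<Rightarrow> real. continuous_on circle f \<longrightarrow>
      (\<lambda>k. integral\<^sup>L (\<mu>s k) f) \<longlonglongrightarrow> integral\<^sup>L \<mu> f)"

text \<open>The function delta, with values in the extended reals (the supremum may be infinite).\<close>
definition delta :: "'k set \<Rightarrow> ('k \<Rightarrow> complex \<Rightarrow> real) \<Rightarrow> complex measure \<Rightarrow> complex measure \<Rightarrow> ereal" where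
  "delta K g \<mu>0 \<mu>1 = (SUP \<xi>\<in>K. ereal \<bar>integral\<^sup>L \<mu>0 (g \<xi>) - integral\<^sup>L \<mu>1 (g \<xi>)\<bar>)"

definition is_metric_on :: "'a set \<Rightarrow> ('a \<Rightarrow> 'a \<Rightarrow> ereal) \<Rightarrow> bool" where
  "is_metric_on A d \<longleftrightarrow>
     (\<forall>x\<in>A. \<forall>y\<in>A. d x y \<noteq> \<infinity> \<and> d x y \<noteq> -\<infinity> \<and> d x y \<ge> 0) \<and>
     (\<forall>x\<in>A. \<forall>y\<in>A. d x y = 0 \<longleftrightarrow> x = y) \<and>
     (\<forall>x\<in>A. \<forall>y\<in>A. d x y = d y x) \<and>
     (\<forall>x\<in>A. \<forall>y\<in>A. \<forall>z\<in>A. d x z \<le> d x y + d y z)"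

definition weakly_continuous :: "(complex measure \<Rightarrow> complex measure \<Rightarrow> ereal) \<Rightarrow> bool" where
  "weakly_continuous d \<longleftrightarrow>
     (\<forall>\<mu>s \<nu>s \<mu> \<nu>. (\<forall>k. \<mu>s k \<in> circle_measures) \<longrightarrow> (\<forall>k. \<nu>s k \<in> circle_measures) \<longrightarrow>
        \<mu> \<in> circle_measures \<longrightarrow> \<nu> \<in> circle_measures \<longrightarrow>
        weak_conv \<mu>s \<mu> \<longrightarrow> weak_conv \<nu>s \<nu> \<longrightarrow>
        (\<lambda>k. d (\<mu>s k) (\<nu>s k)) \<longlonglongrightarrow> d \<mu> \<nu>)"

definition equicontinuous_family :: "'k set \<Rightarrow> ('k \<Rightarrow> complex \<Rightarrow> real) \<Rightarrow> bool" where
  "equicontinuous_family K g \<longleftrightarrow>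
     (\<forall>\<epsilon>>0. \<exists>\<gamma>>0. \<forall>\<xi>\<in>K. \<forall>z1\<in>circle. \<forall>z2\<in>circle. dist z1 z2 < \<gamma> \<longrightarrow> \<bar>g \<xi> z1 - g \<xi> z2\<bar> < \<epsilon>)"

definition uniformly_bounded_family :: "'k set \<Rightarrow> ('k \<Rightarrow> complex \<Rightarrow> real) \<Rightarrow> bool" where
  "uniformly_bounded_family K g \<longleftrightarrow> (\<exists>C. \<forall>\<xi>\<in>K. \<forall>z\<in>circle. \<bar>g \<xi> z\<bar> \<le> C)"

end

theory Submission imports Defs "HOL-Probability.Giry_Monad" "HOL-Complex_Analysis.Great_Picard" begin
abbreviation M0 :: "complex measure" where "M0 \<equiv> restrict_space borel circle"

lemma cm_space: assumes "\<mu> \<in> circle_measures" shows "space \<mu> = circle"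
proof -
  have "sets \<mu> = sets M0" using assms by (simp add: circle_measures_def)
  then have "space \<mu> = space M0" by (rule sets_eq_imp_space_eq)
  then show ?thesis by (simp add: space_restrict_space)
qed

lemma cm_finite: "\<mu> \<in> circle_measures \<Longrightarrow> finite_measure \<mu>"
  unfolding circle_measures_def by (auto intro!: finite_measureI)

lemma cm_meas: "\<mu> \<in> circle_measures \<Longrightarrow> continuous_on circle f \<Longrightarrow> f \<in> borel_measurable \<mu>"
  unfolding circle_measures_def
  using borel_measurable_continuous_on_restrict measurable_cong_sets by blast

lemma cont_bounded:
  fixes f :: "complex \<Rightarrow> real"
  assumes "continuous_on circle f" obtains B where "\<forall>z\<in>circle. \<bar>f z\<bar> \<le> B"
proof -
  have "compact (f ` circle)" by (rule compact_continuous_image[OF assms]) simp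
  then obtain B where "\<forall>y\<in>f`circle. norm y \<le> B" using compact_imp_bounded bounded_iff by metis
  then show ?thesis using that by auto
qed

lemma cm_integrable:
  assumes "\<mu> \<in> circle_measures" "continuous_on circle (f::complex\<Rightarrow>real)"
  shows "integrable \<mu> f"
proof -
  obtain B where B: "\<forall>z\<in>circle. \<bar>f z\<bar> \<le> B" using cont_bounded assms(2) by blast
  interpret finite_measure \<mu> using cm_finite assms(1) .
  show ?thesis
    by (rule integrable_const_bound[of _ B]) (use B cm_space[OF assms(1)] cm_meas[OF assms] in auto)
qed

lemma cm_int_bound:
  assumes "\<mu> \<in> circle_measures" "continuous_on circle (f::complex\<Rightarrow>real)" "\<forall>z\<in>circle. \<bar>f z\<bar> \<le> B"
  shows "\<bar>integral\<^sup>L \<mu> f\<bar> \<le> B * measure \<mu> (space \<mu>)"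
proof -
  interpret finite_measure \<mu> using cm_finite assms(1) .
  have "\<bar>integral\<^sup>L \<mu> f\<bar> \<le> integral\<^sup>L \<mu> (\<lambda>x. \<bar>f x\<bar>)"
    using integral_abs_bound by blast
  also have "\<dots> \<le> integral\<^sup>L \<mu> (\<lambda>x. B)"
    by (rule integral_mono) (use assms cm_integrable cm_space in auto)
  finally show ?thesis by (simp add: mult.commute)
qed

lemma ret_cm: assumes "z \<in> circle" shows "return M0 z \<in> circle_measures"
proof -
  have "prob_space (return M0 z)" by (rule prob_space_return) (use assms in \<open>simp add: space_restrict_space\<close>)
  then have "emeasure (return M0 z) (space (return M0 z)) = 1" by (rule prob_space.emeasure_space_1)
  then show ?thesis unfolding circle_measures_def by simp
qed

lemma null_cm: "null_measure M0 \<in> circle_measures"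
  unfolding circle_measures_def by auto

lemma int_ret: "z \<in> circle \<Longrightarrow> continuous_on circle (f::complex\<Rightarrow>real) \<Longrightarrow> integral\<^sup>L (return M0 z) f = f z"
  by (rule integral_return) (auto simp: space_restrict_space borel_measurable_continuous_on_restrict)

lemma ret_weak:
  assumes "\<forall>n. u n \<in> circle" "a \<in> circle" "u \<longlonglongrightarrow> a"
  shows "weak_conv (\<lambda>n. return M0 (u n)) (return M0 a)"
  unfolding weak_conv_def
proof (intro allI impI)
  fix f :: "complex \<Rightarrow> real" assume f: "continuous_on circle f"
  have "(\<lambda>n. f (u n)) \<longlonglongrightarrow> f a" using f assms unfolding continuous_on_sequentially comp_def by blast
  then show "(\<lambda>k. integral\<^sup>L (return M0 (u k)) f) \<longlonglongrightarrow> integral\<^sup>L (return M0 a) f"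
    using int_ret f assms by simp
qed

lemma weak_const: "weak_conv (\<lambda>n. \<mu>) \<mu>" unfolding weak_conv_def by simp

lemma unif_conv:
  assumes K: "\<forall>\<xi>\<in>K. continuous_on circle (g \<xi>)"
    and eq: "equicontinuous_family K g" and ub: "uniformly_bounded_family K g"
    and ms: "\<forall>k. \<mu>s k \<in> circle_measures" and m: "\<mu> \<in> circle_measures"
    and wc: "weak_conv \<mu>s \<mu>" and e: "\<epsilon> > 0"
  shows "\<exists>N. \<forall>k\<ge>N. \<forall>\<xi>\<in>K. \<bar>integral\<^sup>L (\<mu>s k) (g \<xi>) - integral\<^sup>L \<mu> (g \<xi>)\<bar> < \<epsilon>"
proof (rule ccontr)
  assume "\<not> ?thesis"
  then have "\<forall>N. \<exists>k. k \<ge> N \<and> (\<exists>\<xi>\<in>K. \<bar>integral\<^sup>L (\<mu>s k) (g \<xi>) - integral\<^sup>L \<mu> (g \<xi>)\<bar> \<ge> \<epsilon>)"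
    by (auto simp: not_less)
  then obtain kk xi where kk: "\<And>N. kk N \<ge> N" and xi: "\<And>N. xi N \<in> K"
    and bad: "\<And>N. \<bar>integral\<^sup>L (\<mu>s (kk N)) (g (xi N)) - integral\<^sup>L \<mu> (g (xi N))\<bar> \<ge> \<epsilon>"
    by metis
  obtain C where C: "\<forall>\<xi>\<in>K. \<forall>z\<in>circle. \<bar>g \<xi> z\<bar> \<le> C" using ub unfolding uniformly_bounded_family_def by blast
  define F where "F n = g (xi n)" for n
  obtain h r where hc: "continuous_on circle h" and r: "strict_mono (r :: nat \<Rightarrow> nat)"
    and hu: "\<And>e. 0 < e \<Longrightarrow> \<exists>N. \<forall>n x. n \<ge> N \<and> x \<in> circle \<longrightarrow> norm(F (r n) x - h x) < e"
  proof (rule Arzela_Ascoli[of circle F C])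
    show "compact circle" by simp
    show "norm (F n x) \<le> C" if "x \<in> circle" for n x using C xi that by (auto simp: F_def)
    show "\<exists>d>0. \<forall>n y. y \<in> circle \<and> norm (x - y) < d \<longrightarrow> norm (F n x - F n y) < e"
      if "x \<in> circle" "0 < e" for x e
    proof -
      obtain d where "d > 0" and d: "\<forall>\<xi>\<in>K. \<forall>z1\<in>circle. \<forall>z2\<in>circle. dist z1 z2 < d \<longrightarrow> \<bar>g \<xi> z1 - g \<xi> z2\<bar> < e"
        using eq \<open>0 < e\<close> unfolding equicontinuous_family_def by blast
      show ?thesis using d \<open>d > 0\<close> xi that by (auto simp: F_def dist_norm)
    qed
  qed blast
  define mass where "mass k = measure (\<mu>s k) (space (\<mu>s k))" for k
  have "(\<lambda>k. integral\<^sup>L (\<mu>s k) (\<lambda>_. 1::real)) \<longlonglongrightarrow> integral\<^sup>L \<mu> (\<lambda>_. 1::real)"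
    using wc continuous_on_const[of circle "1::real"] unfolding weak_conv_def by blast
  then have mc: "mass \<longlonglongrightarrow> measure \<mu> (space \<mu>)" by (simp add: mass_def[abs_def])
  then obtain Mb where Mb: "\<And>k. mass k \<le> Mb" "Mb > 0"
    using convergent_imp_Bseq[OF convergentI[OF mc]] by (metis BseqE abs_le_D1 real_norm_def)
  define Mm where "Mm = measure \<mu> (space \<mu>)"
  have Mm: "Mm \<ge> 0" by (simp add: Mm_def)
  define \<eta> where "\<eta> = \<epsilon> / (3 * (Mb + Mm + 1))"
  have \<eta>: "\<eta> > 0" using e Mb Mm by (simp add: \<eta>_def)
  have \<eta>1: "\<eta> * Mb \<le> \<epsilon>/3" "\<eta> * Mm \<le> \<epsilon>/3"
    using e Mb Mm by (auto simp: \<eta>_def field_simps)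
  obtain N1 where N1: "\<And>n x. n \<ge> N1 \<Longrightarrow> x \<in> circle \<Longrightarrow> \<bar>F (r n) x - h x\<bar> < \<eta>"
    using hu[OF \<eta>] by auto
  define mm where "mm n = kk (r n)" for n
  have mm_ge: "mm n \<ge> n" for n using kk[of "r n"] seq_suble[OF r, of n] by (simp add: mm_def)
  have fl: "filterlim mm at_top sequentially"
    by (rule filterlim_at_top_mono[OF filterlim_ident]) (use mm_ge in auto)
  have "(\<lambda>k. integral\<^sup>L (\<mu>s k) h) \<longlonglongrightarrow> integral\<^sup>L \<mu> h" using wc hc unfolding weak_conv_def by blast
  then have "(\<lambda>n. integral\<^sup>L (\<mu>s (mm n)) h) \<longlonglongrightarrow> integral\<^sup>L \<mu> h"
    using filterlim_compose[OF _ fl] by blast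
  then obtain N2 where N2: "\<And>n. n \<ge> N2 \<Longrightarrow> \<bar>integral\<^sup>L (\<mu>s (mm n)) h - integral\<^sup>L \<mu> h\<bar> < \<epsilon>/3"
    using e unfolding LIMSEQ_def dist_real_def by (metis less_divide_eq_numeral1(1) mult_eq_0_iff zero_less_mult_iff)
  define n where "n = max N1 N2"
  have Fc: "continuous_on circle (F (r n))" using K xi by (simp add: F_def)
  have dc: "continuous_on circle (\<lambda>x. F (r n) x - h x)" by (intro continuous_intros Fc hc)
  have db: "\<forall>z\<in>circle. \<bar>F (r n) z - h z\<bar> \<le> \<eta>" using N1[of n] by (auto simp: n_def less_imp_le)
  have i1: "\<bar>integral\<^sup>L (\<mu>s (mm n)) (\<lambda>x. F (r n) x - h x)\<bar> \<le> \<eta> * mass (mm n)"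
    using cm_int_bound[OF ms[rule_format] dc db] by (simp add: mass_def)
  have i2: "\<bar>integral\<^sup>L \<mu> (\<lambda>x. F (r n) x - h x)\<bar> \<le> \<eta> * Mm"
    using cm_int_bound[OF m dc db] by (simp add: Mm_def)
  have e1: "integral\<^sup>L (\<mu>s (mm n)) (\<lambda>x. F (r n) x - h x) = integral\<^sup>L (\<mu>s (mm n)) (F (r n)) - integral\<^sup>L (\<mu>s (mm n)) h"
    by (rule Bochner_Integration.integral_diff) (use cm_integrable ms Fc hc in auto)
  have e2: "integral\<^sup>L \<mu> (\<lambda>x. F (r n) x - h x) = integral\<^sup>L \<mu> (F (r n)) - integral\<^sup>L \<mu> h"
    by (rule Bochner_Integration.integral_diff) (use cm_integrable m Fc hc in auto)
  have "\<eta> * mass (mm n) \<le> \<eta> * Mb" using Mb \<eta> by simp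
  moreover have "\<bar>integral\<^sup>L (\<mu>s (mm n)) h - integral\<^sup>L \<mu> h\<bar> < \<epsilon>/3" using N2 by (simp add: n_def)
  ultimately have "\<bar>integral\<^sup>L (\<mu>s (mm n)) (F (r n)) - integral\<^sup>L \<mu> (F (r n))\<bar> < \<epsilon>"
    using i1 i2 e1 e2 \<eta>1 by linarith
  then show False using bad[of "r n"] by (simp add: F_def mm_def)
qed

lemma ereal_le_real: "ereal x \<le> e \<Longrightarrow> e \<noteq> \<infinity> \<Longrightarrow> x \<le> real_of_ereal e"
  by (cases e) auto

lemma delta_ret_null:
  assumes cont: "\<forall>\<xi>\<in>K. continuous_on circle (g \<xi>)" and z: "z \<in> circle"
  shows "delta K g (return M0 z) (null_measure M0) = (SUP \<xi>\<in>K. ereal \<bar>g \<xi> z\<bar>)"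
  unfolding delta_def using int_ret[OF z] cont by (intro SUP_cong) auto

lemma delta_ret_ret:
  assumes cont: "\<forall>\<xi>\<in>K. continuous_on circle (g \<xi>)" and z: "z \<in> circle" "w \<in> circle"
  shows "delta K g (return M0 z) (return M0 w) = (SUP \<xi>\<in>K. ereal \<bar>g \<xi> z - g \<xi> w\<bar>)"
  unfolding delta_def using int_ret[OF z(1)] int_ret[OF z(2)] cont by (intro SUP_cong) auto

lemma tendsto_real_of_ereal:
  assumes "(f \<longlongrightarrow> x) F" "\<bar>x\<bar> \<noteq> \<infinity>"
  shows "((\<lambda>y. real_of_ereal (f y)) \<longlongrightarrow> real_of_ereal x) F"
  using assms by (cases x) auto

lemma metric_fin: "is_metric_on A d \<Longrightarrow> x \<in> A \<Longrightarrow> y \<in> A \<Longrightarrow> \<bar>d x y\<bar> \<noteq> \<infinity>"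
  unfolding is_metric_on_def by (cases "d x y") auto

lemma metric_fin2: "is_metric_on A d \<Longrightarrow> x \<in> A \<Longrightarrow> y \<in> A \<Longrightarrow> d x y \<noteq> \<infinity>"
  unfolding is_metric_on_def by auto

lemma metric_0: "is_metric_on A d \<Longrightarrow> x \<in> A \<Longrightarrow> d x x = 0"
  unfolding is_metric_on_def by auto

lemma fwd:
  assumes cont: "\<forall>\<xi>\<in>K. continuous_on circle (g \<xi>)"
    and met: "is_metric_on circle_measures (delta K g)" and wc: "weakly_continuous (delta K g)"
  shows "(\<forall>\<mu>0\<in>circle_measures. \<forall>\<mu>1\<in>circle_measures. \<mu>0 \<noteq> \<mu>1 \<longrightarrow>
              (\<exists>\<xi>\<in>K. integral\<^sup>L \<mu>0 (g \<xi>) \<noteq> integral\<^sup>L \<mu>1 (g \<xi>))) \<and>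
          equicontinuous_family K g \<and> uniformly_bounded_family K g"
proof (intro conjI)
  note M = met[unfolded is_metric_on_def]
  show "\<forall>\<mu>0\<in>circle_measures. \<forall>\<mu>1\<in>circle_measures. \<mu>0 \<noteq> \<mu>1 \<longrightarrow>
              (\<exists>\<xi>\<in>K. integral\<^sup>L \<mu>0 (g \<xi>) \<noteq> integral\<^sup>L \<mu>1 (g \<xi>))"
  proof (intro ballI impI, rule ccontr)
    fix \<mu>0 \<mu>1 assume m: "\<mu>0 \<in> circle_measures" "\<mu>1 \<in> circle_measures" "\<mu>0 \<noteq> \<mu>1"
      and "\<not> (\<exists>\<xi>\<in>K. integral\<^sup>L \<mu>0 (g \<xi>) \<noteq> integral\<^sup>L \<mu>1 (g \<xi>))"
    then have eqs: "\<forall>\<xi>\<in>K. integral\<^sup>L \<mu>0 (g \<xi>) = integral\<^sup>L \<mu>1 (g \<xi>)" by blast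
    have "delta K g \<mu>0 \<mu>1 \<le> 0" unfolding delta_def by (rule SUP_least) (use eqs in auto)
    moreover have "delta K g \<mu>0 \<mu>1 \<ge> 0" using M m by blast
    ultimately have "delta K g \<mu>0 \<mu>1 = 0" by simp
    then show False using M m by blast
  qed
  define H where "H z = real_of_ereal (delta K g (return M0 z) (null_measure M0))" for z
  have Hc: "continuous_on circle H"
  proof (rule continuous_on_sequentiallyI)
    fix u a assume u: "\<forall>n. u n \<in> circle" "a \<in> circle" "u \<longlonglongrightarrow> a"
    have "(\<lambda>k. delta K g (return M0 (u k)) (null_measure M0)) \<longlonglongrightarrow> delta K g (return M0 a) (null_measure M0)"
      by (rule wc[unfolded weakly_continuous_def, rule_format]) (use ret_cm u null_cm ret_weak[OF u] weak_const in auto)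
    moreover have "\<bar>delta K g (return M0 a) (null_measure M0)\<bar> \<noteq> \<infinity>"
      using metric_fin[OF met ret_cm[OF u(2)] null_cm] .
    ultimately show "(\<lambda>n. H (u n)) \<longlonglongrightarrow> H a" unfolding H_def by (rule tendsto_real_of_ereal)
  qed
  obtain B where B: "\<forall>z\<in>circle. \<bar>H z\<bar> \<le> B" using cont_bounded[OF Hc] by blast
  show "uniformly_bounded_family K g" unfolding uniformly_bounded_family_def
  proof (intro exI ballI)
    fix \<xi> z assume x: "\<xi> \<in> K" "z \<in> circle"
    have "ereal \<bar>g \<xi> z\<bar> \<le> delta K g (return M0 z) (null_measure M0)"
      unfolding delta_ret_null[OF cont x(2)] using x(1) by (rule SUP_upper)
    then have "\<bar>g \<xi> z\<bar> \<le> H z" unfolding H_def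
      by (rule ereal_le_real) (rule metric_fin2[OF met ret_cm[OF x(2)] null_cm])
    then show "\<bar>g \<xi> z\<bar> \<le> B" using B x by force
  qed
  define E where "E p = real_of_ereal (delta K g (return M0 (fst p)) (return M0 (snd p)))" for p
  have Ec: "continuous_on (circle \<times> circle) E"
  proof (rule continuous_on_sequentiallyI)
    fix u a assume u: "\<forall>n. u n \<in> circle \<times> circle" "a \<in> circle \<times> circle" "u \<longlonglongrightarrow> a"
    have u1: "\<forall>n. fst (u n) \<in> circle" "fst a \<in> circle" "(\<lambda>n. fst (u n)) \<longlonglongrightarrow> fst a"
      using u by (auto simp: mem_Times_iff intro: tendsto_fst)
    have u2: "\<forall>n. snd (u n) \<in> circle" "snd a \<in> circle" "(\<lambda>n. snd (u n)) \<longlonglongrightarrow> snd a"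
      using u by (auto simp: mem_Times_iff intro: tendsto_snd)
    have "(\<lambda>k. delta K g (return M0 (fst (u k))) (return M0 (snd (u k)))) \<longlonglongrightarrow> delta K g (return M0 (fst a)) (return M0 (snd a))"
      by (rule wc[unfolded weakly_continuous_def, rule_format]) (use ret_cm u1 u2 ret_weak[OF u1] ret_weak[OF u2] in auto)
    moreover have "\<bar>delta K g (return M0 (fst a)) (return M0 (snd a))\<bar> \<noteq> \<infinity>"
      using metric_fin[OF met ret_cm[OF u1(2)] ret_cm[OF u2(2)]] .
    ultimately show "(\<lambda>n. E (u n)) \<longlonglongrightarrow> E a" unfolding E_def by (rule tendsto_real_of_ereal)
  qed
  have Eu: "uniformly_continuous_on (circle \<times> circle) E"
    by (rule compact_uniformly_continuous[OF Ec]) (simp add: compact_Times)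
  show "equicontinuous_family K g" unfolding equicontinuous_family_def
  proof (intro allI impI)
    fix \<epsilon> :: real assume e: "\<epsilon> > 0"
    obtain d where d: "d > 0" and dd: "\<forall>x\<in>circle \<times> circle. \<forall>x'\<in>circle \<times> circle. dist x' x < d \<longrightarrow> dist (E x') (E x) < \<epsilon>"
      using Eu e unfolding uniformly_continuous_on_def by blast
    show "\<exists>\<gamma>>0. \<forall>\<xi>\<in>K. \<forall>z1\<in>circle. \<forall>z2\<in>circle. dist z1 z2 < \<gamma> \<longrightarrow> \<bar>g \<xi> z1 - g \<xi> z2\<bar> < \<epsilon>"
    proof (intro exI conjI ballI impI)
      fix \<xi> z1 z2 assume x: "\<xi> \<in> K" "z1 \<in> circle" "z2 \<in> circle" and dz: "dist z1 z2 < d"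
      have "dist (z1, z2) (z2, z2) = dist z1 z2" by (simp add: dist_Pair_Pair)
      then have "dist (E (z1, z2)) (E (z2, z2)) < \<epsilon>" using dd x dz by auto
      moreover have "E (z2, z2) = 0" using metric_0[OF met ret_cm[OF x(3)]] by (simp add: E_def)
      moreover have "ereal \<bar>g \<xi> z1 - g \<xi> z2\<bar> \<le> delta K g (return M0 z1) (return M0 z2)"
        unfolding delta_ret_ret[OF cont x(2,3)] using x(1) by (rule SUP_upper)
      then have "\<bar>g \<xi> z1 - g \<xi> z2\<bar> \<le> E (z1, z2)" unfolding E_def fst_conv snd_conv
        by (rule ereal_le_real) (rule metric_fin2[OF met ret_cm[OF x(2)] ret_cm[OF x(3)]])
      ultimately show "\<bar>g \<xi> z1 - g \<xi> z2\<bar> < \<epsilon>" by (simp add: dist_real_def)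
    qed (use d in auto)
  qed
qed

lemma null_ne_ret: "z \<in> circle \<Longrightarrow> null_measure M0 \<noteq> return M0 z"
proof
  assume z: "z \<in> circle" and eq: "null_measure M0 = return M0 z"
  have "prob_space (return M0 z)" by (rule prob_space_return) (use z in \<open>simp add: space_restrict_space\<close>)
  then have "emeasure (return M0 z) (space (return M0 z)) = 1" by (rule prob_space.emeasure_space_1)
  then show False using eq[symmetric] by simp
qed

lemma bwd:
  assumes cont: "\<forall>\<xi>\<in>K. continuous_on circle (g \<xi>)"
    and sep: "\<forall>\<mu>0\<in>circle_measures. \<forall>\<mu>1\<in>circle_measures. \<mu>0 \<noteq> \<mu>1 \<longrightarrow>
              (\<exists>\<xi>\<in>K. integral\<^sup>L \<mu>0 (g \<xi>) \<noteq> integral\<^sup>L \<mu>1 (g \<xi>))"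
    and eq: "equicontinuous_family K g" and ub: "uniformly_bounded_family K g"
  shows "is_metric_on circle_measures (delta K g) \<and> weakly_continuous (delta K g)"
proof
  have "(1::complex) \<in> circle" by simp
  then obtain \<xi>0 where \<xi>0: "\<xi>0 \<in> K" using sep null_cm ret_cm null_ne_ret by blast
  obtain C where C: "\<forall>\<xi>\<in>K. \<forall>z\<in>circle. \<bar>g \<xi> z\<bar> \<le> C" using ub unfolding uniformly_bounded_family_def by blast
  define ms where "ms \<mu> = measure \<mu> (space \<mu>)" for \<mu> :: "complex measure"
  have ib: "\<bar>integral\<^sup>L \<mu> (g \<xi>)\<bar> \<le> C * ms \<mu>" if "\<mu> \<in> circle_measures" "\<xi> \<in> K" for \<mu> \<xi>
    unfolding ms_def by (rule cm_int_bound) (use that cont C in auto)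
  have up: "ereal \<bar>integral\<^sup>L x (g \<xi>) - integral\<^sup>L y (g \<xi>)\<bar> \<le> delta K g x y" if "\<xi> \<in> K" for x y \<xi>
    unfolding delta_def using that by (rule SUP_upper)
  have fin: "delta K g x y \<noteq> \<infinity> \<and> delta K g x y \<noteq> -\<infinity> \<and> delta K g x y \<ge> 0"
    if "x \<in> circle_measures" "y \<in> circle_measures" for x y
  proof -
    have "delta K g x y \<le> ereal (C * ms x + C * ms y)" unfolding delta_def
    proof (rule SUP_least)
      fix \<xi> assume xi: "\<xi> \<in> K"
      have "\<bar>integral\<^sup>L x (g \<xi>) - integral\<^sup>L y (g \<xi>)\<bar> \<le> C * ms x + C * ms y"
        using ib[OF that(1) xi] ib[OF that(2) xi] by linarith
      then show "ereal \<bar>integral\<^sup>L x (g \<xi>) - integral\<^sup>L y (g \<xi>)\<bar> \<le> ereal (C * ms x + C * ms y)"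
        by simp
    qed
    moreover have "0 \<le> delta K g x y" using up[OF \<xi>0, of x y] by (meson abs_ge_zero ereal_less_eq(5) order_trans)
    ultimately show ?thesis by auto
  qed
  have sym: "delta K g x y = delta K g y x" for x y
    unfolding delta_def by (simp add: abs_minus_commute)
  have zero: "delta K g x y = 0 \<longleftrightarrow> x = y" if "x \<in> circle_measures" "y \<in> circle_measures" for x y
  proof
    assume d0: "delta K g x y = 0"
    have "\<forall>\<xi>\<in>K. integral\<^sup>L x (g \<xi>) = integral\<^sup>L y (g \<xi>)"
    proof
      fix \<xi> assume "\<xi> \<in> K"
      from up[OF this, of x y] d0 show "integral\<^sup>L x (g \<xi>) = integral\<^sup>L y (g \<xi>)" by simp
    qed
    then show "x = y" using sep that by blast
  next
    assume "x = y"
    have "K \<noteq> {}" using \<xi>0 by blast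
    then show "delta K g x y = 0" unfolding delta_def using \<open>x = y\<close> by (simp add: SUP_const)
  qed
  have tri: "delta K g x z \<le> delta K g x y + delta K g y z" for x y z
    unfolding delta_def[of K g x z]
  proof (rule SUP_least)
    fix \<xi> assume x: "\<xi> \<in> K"
    have "ereal \<bar>integral\<^sup>L x (g \<xi>) - integral\<^sup>L z (g \<xi>)\<bar> \<le> ereal \<bar>integral\<^sup>L x (g \<xi>) - integral\<^sup>L y (g \<xi>)\<bar> + ereal \<bar>integral\<^sup>L y (g \<xi>) - integral\<^sup>L z (g \<xi>)\<bar>"
      by simp
    also have "\<dots> \<le> delta K g x y + delta K g y z" by (rule add_mono; rule up[OF x])
    finally show "ereal \<bar>integral\<^sup>L x (g \<xi>) - integral\<^sup>L z (g \<xi>)\<bar> \<le> delta K g x y + delta K g y z" .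
  qed
  show "is_metric_on circle_measures (delta K g)"
    unfolding is_metric_on_def by (intro conjI ballI) (simp_all add: fin zero sym tri)
  show "weakly_continuous (delta K g)" unfolding weakly_continuous_def
  proof (intro allI impI)
    fix \<mu>s \<nu>s \<mu> \<nu> assume a: "\<forall>k. \<mu>s k \<in> circle_measures" "\<forall>k. \<nu>s k \<in> circle_measures"
      "\<mu> \<in> circle_measures" "\<nu> \<in> circle_measures" "weak_conv \<mu>s \<mu>" "weak_conv \<nu>s \<nu>"
    define R where "R k = real_of_ereal (delta K g (\<mu>s k) (\<nu>s k))" for k
    define R0 where "R0 = real_of_ereal (delta K g \<mu> \<nu>)"
    have ER: "delta K g (\<mu>s k) (\<nu>s k) = ereal (R k)" for k
      using fin[OF a(1)[rule_format] a(2)[rule_format], of k k] unfolding R_def by (cases "delta K g (\<mu>s k) (\<nu>s k)") auto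
    have ER0: "delta K g \<mu> \<nu> = ereal R0"
      using fin[OF a(3) a(4)] unfolding R0_def by (cases "delta K g \<mu> \<nu>") auto
    have "R \<longlonglongrightarrow> R0"
    proof (rule LIMSEQ_I)
      fix r :: real assume r: "0 < r"
      define e where "e = r / 4"
      have e: "e > 0" using r by (simp add: e_def)
      obtain N1 where N1: "\<forall>k\<ge>N1. \<forall>\<xi>\<in>K. \<bar>integral\<^sup>L (\<mu>s k) (g \<xi>) - integral\<^sup>L \<mu> (g \<xi>)\<bar> < e"
        using unif_conv[OF cont eq ub a(1) a(3) a(5) e] by blast
      obtain N2 where N2: "\<forall>k\<ge>N2. \<forall>\<xi>\<in>K. \<bar>integral\<^sup>L (\<nu>s k) (g \<xi>) - integral\<^sup>L \<nu> (g \<xi>)\<bar> < e"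
        using unif_conv[OF cont eq ub a(2) a(4) a(6) e] by blast
      show "\<exists>no. \<forall>n\<ge>no. norm (R n - R0) < r"
      proof (intro exI allI impI)
        fix k assume k: "max N1 N2 \<le> k"
        have b1: "delta K g (\<mu>s k) (\<nu>s k) \<le> ereal (R0 + 2 * e)" unfolding delta_def[of K g "\<mu>s k"]
        proof (rule SUP_least)
          fix \<xi> assume x: "\<xi> \<in> K"
          have "ereal \<bar>integral\<^sup>L \<mu> (g \<xi>) - integral\<^sup>L \<nu> (g \<xi>)\<bar> \<le> ereal R0" using up[OF x, of \<mu> \<nu>] ER0 by simp
          then show "ereal \<bar>integral\<^sup>L (\<mu>s k) (g \<xi>) - integral\<^sup>L (\<nu>s k) (g \<xi>)\<bar> \<le> ereal (R0 + 2 * e)"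
            using N1[rule_format, of k \<xi>] N2[rule_format, of k \<xi>] k x by (auto simp: abs_le_iff abs_less_iff)
        qed
        have b2: "delta K g \<mu> \<nu> \<le> ereal (R k + 2 * e)" unfolding delta_def[of K g \<mu>]
        proof (rule SUP_least)
          fix \<xi> assume x: "\<xi> \<in> K"
          have "ereal \<bar>integral\<^sup>L (\<mu>s k) (g \<xi>) - integral\<^sup>L (\<nu>s k) (g \<xi>)\<bar> \<le> ereal (R k)" using up[OF x, of "\<mu>s k" "\<nu>s k"] ER[of k] by simp
          then show "ereal \<bar>integral\<^sup>L \<mu> (g \<xi>) - integral\<^sup>L \<nu> (g \<xi>)\<bar> \<le> ereal (R k + 2 * e)"
            using N1[rule_format, of k \<xi>] N2[rule_format, of k \<xi>] k x by (auto simp: abs_le_iff abs_less_iff)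
        qed
        have "R k \<le> R0 + 2 * e" "R0 \<le> R k + 2 * e" using b1 b2 ER ER0 by auto
        then show "norm (R k - R0) < r" using e by (simp add: e_def abs_le_iff)
      qed
    qed
    then have "(\<lambda>k. ereal (R k)) \<longlonglongrightarrow> ereal R0" by (rule tendsto_ereal)
    then show "(\<lambda>k. delta K g (\<mu>s k) (\<nu>s k)) \<longlonglongrightarrow> delta K g \<mu> \<nu>" using ER ER0 by simp
  qed
qed

theorem proposition4:
  fixes K :: "'k set" and g :: "'k \<Rightarrow> complex \<Rightarrow> real"
  assumes cont: "\<forall>\<xi>\<in>K. continuous_on circle (g \<xi>)"
  shows "(is_metric_on circle_measures (delta K g) \<and> weakly_continuous (delta K g)) \<longleftrightarrow>
         ((\<forall>\<mu>0\<in>circle_measures. \<forall>\<mu>1\<in>circle_measures. \<mu>0 \<noteq> \<mu>1 \<longrightarrow>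
              (\<exists>\<xi>\<in>K. integral\<^sup>L \<mu>0 (g \<xi>) \<noteq> integral\<^sup>L \<mu>1 (g \<xi>))) \<and>
          equicontinuous_family K g \<and> uniformly_bounded_family K g)"
  using fwd[OF cont] bwd[OF cont] by blast

end
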